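(* Let $\mathcal{M}=(N,\mathcal{I})$ be a matroid or a $p$-matchoid, let $f:2^N\to\mathbb{R}$ be a normalized submodular function, let $\varepsilon\in(0,1/3)$, and let $\lambda\ge0$ satisfy $(1-\varepsilon)\lambda\le f(\{e\})\le\lambda$ for all $e\in N$. For $\delta\in[0,1]$ let $S_\delta$ denote a random subset of $N$ containing each element independently with probability $\delta$, and consider the two conditions (C1) $\mathbb{E}\bigl|\{e\in N: f_{S_\delta}(e)\le(1-\varepsilon)\lambda\}\bigr|\le\varepsilon|N|$, and (C2) $\mathbb{E}|\mathrm{span}(S_\delta)|\le\varepsilon|N|$. Suppose some $\delta\in[0,1]$ satisfies both, and let $\delta$ be the largest such value. Let $S=S_\delta$ and $I=\{e\in S: f_{S\setminus\{e\}}(e)\ge(1-\varepsilon)\lambda\text{ and } e\notin\mathrm{span}(S\setminus\{e\})\}$. Then: (i) $I\subseteq S$, $I\in\mathcal{I}$ always, and $\mathbb{E}[f(I)]\ge(1-3\varepsilon)\lambda\,\mathbb{E}|S|$; in particular $(I,S)$ is a $(1-3\varepsilon)$-greedy block with respect to $\mathcal{M}$ and $f$; (ii) $\mathbb{E}\bigl|\{e\in N\setminus\mathrm{span}(S): f_S(e)>(1-\varepsilon)\lambda\}\bigr|\le(1-\varepsilon)|N|$.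
   Context: $f$ is normalized if $f(\emptyset)=0$ and submodular if $f(A)+f(B)\ge f(A\cup B)+f(A\cap B)$; $f_S(e)=f(S\cup\{e\})-f(S)$ (so $f_S(e)=0$ if $e\in S$). For a matroid, $\mathrm{span}(S)=\{e:\mathrm{rank}(S\cup\{e\})=\mathrm{rank}(S)\}$. A $p$-matchoid is given by matroids $\mathcal{M}_j=(N_j,\mathcal{I}_j)$, $N_j\subseteq N$, each element in at most $p$ of the $N_j$, with $\mathcal{I}=\{S: S\cap N_j\in\mathcal{I}_j\ \forall j\}$; its span is $\mathrm{span}(S)=\bigcup_j\mathrm{span}_j(S\cap N_j)$, where $\mathrm{span}_j$ is the span in $\mathcal{M}_j$. For a set system $(N,\mathcal{I})$, a real-valued $f$ and $\alpha\in[0,1]$, an $\alpha$-greedy block is a random pair $(I,S)$ with $I\subseteq S\subseteq N$, $I\in\mathcal{I}$ always, and $\mathbb{E}[f(I)]\ge\alpha\,\mathbb{E}[|S|]\cdot\max\{0,\max_{e\in N}f(\{e\})\}$. *)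

theory Defs
  imports Complex_Main
begin

definition matroid :: "'a set \<Rightarrow> 'a set set \<Rightarrow> bool" where
  "matroid E Ind \<longleftrightarrow> finite E \<and> Ind \<subseteq> Pow E \<and> {} \<in> Ind
     \<and> (\<forall>A B. A \<in> Ind \<and> B \<subseteq> A \<longrightarrow> B \<in> Ind)
     \<and> (\<forall>A B. A \<in> Ind \<and> B \<in> Ind \<and> card A < card B \<longrightarrow> (\<exists>e\<in>B - A. insert e A \<in> Ind))"

definition mrank :: "'a set set \<Rightarrow> 'a set \<Rightarrow> nat" where
  "mrank Ind S = Max {card X | X. X \<subseteq> S \<and> X \<in> Ind}"

definition mspan :: "'a set \<Rightarrow> 'a set set \<Rightarrow> 'a set \<Rightarrow> 'a set" where
  "mspan E Ind S = {e \<in> E. mrank Ind (insert e S) = mrank Ind S}"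

definition p_matchoid :: "'a set \<Rightarrow> 'j set \<Rightarrow> ('j \<Rightarrow> 'a set) \<Rightarrow> ('j \<Rightarrow> 'a set set) \<Rightarrow> nat \<Rightarrow> bool" where
  "p_matchoid N J Nj Ij p \<longleftrightarrow> finite N \<and> finite J
     \<and> (\<forall>j\<in>J. Nj j \<subseteq> N \<and> matroid (Nj j) (Ij j))
     \<and> (\<forall>e\<in>N. card {j \<in> J. e \<in> Nj j} \<le> p)"

definition matchoid_indep :: "'a set \<Rightarrow> 'j set \<Rightarrow> ('j \<Rightarrow> 'a set) \<Rightarrow> ('j \<Rightarrow> 'a set set) \<Rightarrow> 'a set set" where
  "matchoid_indep N J Nj Ij = {S. S \<subseteq> N \<and> (\<forall>j\<in>J. S \<inter> Nj j \<in> Ij j)}"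

definition matchoid_span :: "'j set \<Rightarrow> ('j \<Rightarrow> 'a set) \<Rightarrow> ('j \<Rightarrow> 'a set set) \<Rightarrow> 'a set \<Rightarrow> 'a set" where
  "matchoid_span J Nj Ij S = (\<Union>j\<in>J. mspan (Nj j) (Ij j) (S \<inter> Nj j))"

definition normalized :: "('a set \<Rightarrow> real) \<Rightarrow> bool" where
  "normalized f \<longleftrightarrow> f {} = 0"

definition submodular_on :: "'a set \<Rightarrow> ('a set \<Rightarrow> real) \<Rightarrow> bool" where
  "submodular_on N f \<longleftrightarrow> (\<forall>A B. A \<subseteq> N \<longrightarrow> B \<subseteq> N \<longrightarrow> f A + f B \<ge> f (A \<union> B) + f (A \<inter> B))"

definition marg :: "('a set \<Rightarrow> real) \<Rightarrow> 'a set \<Rightarrow> 'a \<Rightarrow> real" where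
  "marg f S e = f (insert e S) - f S"

text \<open>Expectation of g(S_delta), where S_delta contains every element of N independently
  with probability delta (with the convention 0^0 = 1).\<close>
definition expect_rand :: "'a set \<Rightarrow> real \<Rightarrow> ('a set \<Rightarrow> real) \<Rightarrow> real" where
  "expect_rand N \<delta> g = (\<Sum>S\<in>Pow N. \<delta> ^ card S * (1 - \<delta>) ^ card (N - S) * g S)"

text \<open>(I,S) with S = S_delta and I = Imap S is an alpha-greedy block.\<close>
definition greedy_block_rand :: "'a set \<Rightarrow> 'a set set \<Rightarrow> ('a set \<Rightarrow> real) \<Rightarrow> real \<Rightarrow> real \<Rightarrow> ('a set \<Rightarrow> 'a set) \<Rightarrow> bool" where
  "greedy_block_rand N Ind f \<alpha> \<delta> Imap \<longleftrightarrow>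
     (\<forall>S\<subseteq>N. Imap S \<subseteq> S \<and> Imap S \<in> Ind) \<and>
     expect_rand N \<delta> (\<lambda>S. f (Imap S)) \<ge>
       \<alpha> * expect_rand N \<delta> (\<lambda>S. real (card S)) *
       max 0 (if N = {} then 0 else Max ((\<lambda>e. f {e}) ` N))"

end

theory Submission
  imports Defs
begin



lemma er_cong: "(\<And>S. S \<subseteq> N \<Longrightarrow> g S = h S) \<Longrightarrow> expect_rand N d g = expect_rand N d h"
  unfolding expect_rand_def by (rule sum.cong) auto

lemma er_mono: "0 \<le> d \<Longrightarrow> d \<le> 1 \<Longrightarrow> (\<And>S. S \<subseteq> N \<Longrightarrow> g S \<le> h S) \<Longrightarrow> expect_rand N d g \<le> expect_rand N d h"
  unfolding expect_rand_def by (intro sum_mono mult_left_mono) auto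

lemma er_sum: "expect_rand N d (\<lambda>S. \<Sum>e\<in>A. h e S) = (\<Sum>e\<in>A. expect_rand N d (h e))"
  unfolding expect_rand_def by (simp add: sum_distrib_left sum.swap[of _ A])

lemma er_diff: "expect_rand N d (\<lambda>S. g S - h S) = expect_rand N d g - expect_rand N d h"
  unfolding expect_rand_def by (simp add: algebra_simps sum_subtractf)

lemma er_cmult: "expect_rand N d (\<lambda>S. c * g S) = c * expect_rand N d g"
  unfolding expect_rand_def by (simp add: algebra_simps sum_distrib_left)

lemma er_split:
  assumes "finite N" "e \<notin> N"
  shows "expect_rand (insert e N) d h = d * expect_rand N d (\<lambda>S. h (insert e S)) + (1-d) * expect_rand N d h"
proof -
  have fin: "finite (Pow N)" "finite (insert e ` Pow N)" using assms by auto
  have disj: "Pow N \<inter> insert e ` Pow N = {}" using assms by auto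
  have inj: "inj_on (insert e) (Pow N)" using assms by (auto simp: inj_on_def)
  have "expect_rand (insert e N) d h = (\<Sum>S\<in>Pow N. d ^ card S * (1 - d) ^ card (insert e N - S) * h S)
      + (\<Sum>S\<in>insert e ` Pow N. d ^ card S * (1 - d) ^ card (insert e N - S) * h S)"
    unfolding expect_rand_def Pow_insert by (rule sum.union_disjoint[OF fin disj])
  also have "(\<Sum>S\<in>Pow N. d ^ card S * (1 - d) ^ card (insert e N - S) * h S)
     = (\<Sum>S\<in>Pow N. (1-d) * (d ^ card S * (1 - d) ^ card (N - S) * h S))"
  proof (rule sum.cong)
    fix S assume "S \<in> Pow N"
    then have "insert e N - S = insert e (N - S)" "e \<notin> N - S" "finite (N - S)" using assms by auto
    then show "d ^ card S * (1 - d) ^ card (insert e N - S) * h S = (1-d) * (d ^ card S * (1 - d) ^ card (N - S) * h S)"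
      by simp
  qed simp
  also have "(\<Sum>S\<in>insert e ` Pow N. d ^ card S * (1 - d) ^ card (insert e N - S) * h S)
     = (\<Sum>S\<in>Pow N. d * (d ^ card S * (1 - d) ^ card (N - S) * h (insert e S)))"
    unfolding sum.reindex[OF inj] o_def
  proof (rule sum.cong)
    fix S assume "S \<in> Pow N"
    then have "insert e N - insert e S = N - S" "e \<notin> S" "finite S" using assms finite_subset by auto
    then show "d ^ card (insert e S) * (1 - d) ^ card (insert e N - insert e S) * h (insert e S) = d * (d ^ card S * (1 - d) ^ card (N - S) * h (insert e S))"
      by simp
  qed simp
  finally show ?thesis unfolding expect_rand_def sum_distrib_left[symmetric] by simp
qed

lemma er_one: "finite N \<Longrightarrow> expect_rand N d (\<lambda>S. 1) = 1"
proof (induction N rule: finite_induct)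
  case empty thus ?case by (simp add: expect_rand_def)
next
  case (insert x F) thus ?case by (simp add: er_split algebra_simps)
qed

lemma er_in:
  assumes "finite N" "e \<in> N"
  shows "expect_rand N d (\<lambda>S. if e \<in> S then g (S - {e}) else 0) = d * expect_rand (N - {e}) d g"
proof -
  have N: "insert e (N - {e}) = N" using assms by auto
  have "expect_rand (insert e (N - {e})) d (\<lambda>S. if e \<in> S then g (S - {e}) else 0) =
    d * expect_rand (N - {e}) d (\<lambda>S. if e \<in> insert e S then g (insert e S - {e}) else 0)
   + (1 - d) * expect_rand (N - {e}) d (\<lambda>S. if e \<in> S then g (S - {e}) else 0)"
    by (rule er_split) (use assms in auto)
  also have "expect_rand (N - {e}) d (\<lambda>S. if e \<in> insert e S then g (insert e S - {e}) else 0) = expect_rand (N - {e}) d g"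
  proof (rule er_cong)
    fix S assume "S \<subseteq> N - {e}"
    then have "e \<notin> S" by blast
    then show "(if e \<in> insert e S then g (insert e S - {e}) else 0) = g S" by simp
  qed
  also have "expect_rand (N - {e}) d (\<lambda>S. if e \<in> S then g (S - {e}) else 0) = expect_rand (N - {e}) d (\<lambda>S. 0)"
    by (rule er_cong) auto
  finally show ?thesis unfolding N by (simp add: expect_rand_def)
qed

lemma er_out:
  assumes "finite N" "e \<in> N"
  shows "expect_rand N d (\<lambda>S. if e \<notin> S then g S else 0) = (1 - d) * expect_rand (N - {e}) d g"
proof -
  have N: "insert e (N - {e}) = N" using assms by auto
  have "expect_rand (insert e (N - {e})) d (\<lambda>S. if e \<notin> S then g S else 0) =
    d * expect_rand (N - {e}) d (\<lambda>S. if e \<notin> insert e S then g (insert e S) else 0)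
   + (1 - d) * expect_rand (N - {e}) d (\<lambda>S. if e \<notin> S then g S else 0)"
    by (rule er_split) (use assms in auto)
  also have "expect_rand (N - {e}) d (\<lambda>S. if e \<notin> S then g S else 0) = expect_rand (N - {e}) d g"
    by (rule er_cong) auto
  finally show ?thesis unfolding N by (simp add: expect_rand_def)
qed

lemma card_sum: "finite N \<Longrightarrow> real (card {e\<in>N. P e}) = (\<Sum>e\<in>N. if P e then 1 else 0)"
  by (simp add: sum.If_cases Int_def)

lemma er_card:
  assumes "finite N"
  shows "expect_rand N d (\<lambda>S. real (card S)) = d * real (card N)"
proof -
  have "expect_rand N d (\<lambda>S. real (card S)) = expect_rand N d (\<lambda>S. \<Sum>e\<in>N. if e \<in> S then (\<lambda>T. 1) (S - {e}) else 0)"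
  proof (rule er_cong)
    fix S assume "S \<subseteq> N"
    then have "S = {e\<in>N. e \<in> S}" by auto
    then show "real (card S) = (\<Sum>e\<in>N. if e \<in> S then (\<lambda>T. 1) (S - {e}) else 0)"
      using card_sum[OF assms, of "\<lambda>e. e \<in> S"] by simp
  qed
  also have "\<dots> = (\<Sum>e\<in>N. d)" unfolding er_sum
  proof (rule sum.cong)
    fix x assume "x \<in> N"
    then show "expect_rand N d (\<lambda>S. if x \<in> S then (\<lambda>T. 1) (S - {x}) else 0) = d"
      using er_in[of N x d "\<lambda>T. 1"] er_one[of "N - {x}" d] assms by simp
  qed simp
  finally show ?thesis by simp
qed

lemma er_nonneg: "0 \<le> d \<Longrightarrow> d \<le> 1 \<Longrightarrow> (\<And>S. S \<subseteq> N \<Longrightarrow> 0 \<le> g S) \<Longrightarrow> 0 \<le> expect_rand N d g"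
  using er_mono[of d N "\<lambda>S. 0" g] by (simp add: expect_rand_def)

lemma er_tendsto: "((\<lambda>x. expect_rand N x g) \<longlongrightarrow> expect_rand N d g) (at_right d)"
  unfolding expect_rand_def by (intro tendsto_intros)

lemma marg_mono:
  assumes "submodular_on N f" "A \<subseteq> B" "B \<subseteq> N" "e \<in> N" "e \<notin> B"
  shows "marg f B e \<le> marg f A e"
proof -
  have "insert e A \<subseteq> N" using assms by auto
  then have "f (insert e A) + f B \<ge> f (insert e A \<union> B) + f (insert e A \<inter> B)"
    using assms unfolding submodular_on_def by blast
  moreover have "insert e A \<union> B = insert e B" "insert e A \<inter> B = A" using assms by auto
  ultimately have "f (insert e A) + f B \<ge> f (insert e B) + f A" by simp
  then show ?thesis unfolding marg_def by linarith
qed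

lemma f_lower:
  assumes "submodular_on N f" "normalized f" "S \<subseteq> N" "finite I" "I \<subseteq> S"
     "\<forall>e\<in>I. marg f (S - {e}) e \<ge> c"
  shows "f I \<ge> c * real (card I)"
  using assms(4,5,6)
proof (induction I rule: finite_induct)
  case empty then show ?case using assms(2) by (simp add: normalized_def)
next
  case (insert x F)
  have "marg f (S - {x}) x \<le> marg f F x"
    by (rule marg_mono[OF assms(1)]) (use insert assms(3) in auto)
  then have "f (insert x F) \<ge> f F + c" using insert unfolding marg_def by auto
  then show ?case using insert by (simp add: algebra_simps)
qed

lemma mrank_fin:
  assumes "matroid E Ind" "Y \<subseteq> E"
  shows "finite {card X | X. X \<subseteq> Y \<and> X \<in> Ind}" "0 \<in> {card X | X. X \<subseteq> Y \<and> X \<in> Ind}"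
proof -
  have fE: "finite E" using assms(1) by (simp add: matroid_def)
  have fY: "finite Y" by (rule finite_subset[OF assms(2) fE])
  have sub: "{card X | X. X \<subseteq> Y \<and> X \<in> Ind} \<subseteq> card ` Pow Y" by blast
  have "finite (card ` Pow Y)" using fY by simp
  then show "finite {card X | X. X \<subseteq> Y \<and> X \<in> Ind}" using sub by (rule finite_subset[rotated])
  have e: "{} \<in> Ind" using assms(1) by (simp add: matroid_def)
  show "0 \<in> {card X | X. X \<subseteq> Y \<and> X \<in> Ind}"
    unfolding mem_Collect_eq using e by (intro exI[of _ "{}"]) simp
qed

lemma mrank_basis:
  assumes "matroid E Ind" "Y \<subseteq> E"
  shows "\<exists>B. B \<subseteq> Y \<and> B \<in> Ind \<and> card B = mrank Ind Y"
proof -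
  have "Max {card X | X. X \<subseteq> Y \<and> X \<in> Ind} \<in> {card X | X. X \<subseteq> Y \<and> X \<in> Ind}"
    using mrank_fin[OF assms] by (intro Max_in) auto
  then show ?thesis unfolding mrank_def by auto
qed

lemma mrank_ge:
  assumes "matroid E Ind" "Y \<subseteq> E" "X \<subseteq> Y" "X \<in> Ind"
  shows "card X \<le> mrank Ind Y"
proof -
  have "card X \<in> {card X | X. X \<subseteq> Y \<and> X \<in> Ind}" using assms(3,4) by blast
  then show ?thesis unfolding mrank_def by (rule Max_ge[OF mrank_fin(1)[OF assms(1,2)]])
qed

lemma indep_core:
  assumes "matroid E Ind" "Y \<subseteq> E" "X \<subseteq> Y" "\<forall>e\<in>X. mrank Ind (Y - {e}) \<noteq> mrank Ind Y"
  shows "X \<in> Ind"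
proof -
  obtain B where B: "B \<subseteq> Y" "B \<in> Ind" "card B = mrank Ind Y" using mrank_basis[OF assms(1,2)] by blast
  have "X \<subseteq> B"
  proof
    fix e assume e: "e \<in> X"
    show "e \<in> B"
    proof (rule ccontr)
      assume eB: "e \<notin> B"
      have YE: "Y - {e} \<subseteq> E" using assms(2) by blast
      have BY: "B \<subseteq> Y - {e}" using B(1) eB by blast
      have 1: "card B \<le> mrank Ind (Y - {e})" by (rule mrank_ge[OF assms(1) YE BY B(2)])
      obtain B' where B': "B' \<subseteq> Y - {e}" "B' \<in> Ind" "card B' = mrank Ind (Y - {e})"
        using mrank_basis[OF assms(1) YE] by blast
      have B'Y: "B' \<subseteq> Y" using B'(1) by blast
      have 2: "card B' \<le> mrank Ind Y" by (rule mrank_ge[OF assms(1,2) B'Y B'(2)])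
      have 3: "mrank Ind (Y - {e}) \<noteq> mrank Ind Y" using e assms(4) by blast
      show False using 1 2 3 B(3) B'(3) by linarith
    qed
  qed
  moreover have "\<forall>A B. A \<in> Ind \<and> B \<subseteq> A \<longrightarrow> B \<in> Ind" using assms(1) by (simp add: matroid_def)
  ultimately show ?thesis using B(2) by blast
qed

theorem mainTheorem5:
  fixes N :: "'a set" and J :: "'j set" and Nj :: "'j \<Rightarrow> 'a set" and Ij :: "'j \<Rightarrow> 'a set set"
    and p :: nat and f :: "'a set \<Rightarrow> real" and eps lam delta :: real
  defines "Ind \<equiv> matchoid_indep N J Nj Ij"
    and "C1 \<equiv> \<lambda>d. expect_rand N d (\<lambda>S. real (card {e \<in> N. marg f S e \<le> (1 - eps) * lam}))
                   \<le> eps * real (card N)"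
    and "C2 \<equiv> \<lambda>d. expect_rand N d (\<lambda>S. real (card (matchoid_span J Nj Ij S))) \<le> eps * real (card N)"
    and "Imap \<equiv> \<lambda>S. {e \<in> S. marg f (S - {e}) e \<ge> (1 - eps) * lam \<and> e \<notin> matchoid_span J Nj Ij (S - {e})}"
  assumes M: "p_matchoid N J Nj Ij p"
    and fnorm: "normalized f" and fsub: "submodular_on N f"
    and epsb: "0 < eps" "eps < 1/3"
    and lamb: "lam \<ge> 0" "\<forall>e\<in>N. (1 - eps) * lam \<le> f {e} \<and> f {e} \<le> lam"
    and deltab: "0 \<le> delta" "delta \<le> 1" "C1 delta" "C2 delta"
    and delta_max: "\<forall>d. 0 \<le> d \<and> d \<le> 1 \<and> C1 d \<and> C2 d \<longrightarrow> d \<le> delta"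
  shows "(\<forall>S\<subseteq>N. Imap S \<subseteq> S \<and> Imap S \<in> Ind)
       \<and> expect_rand N delta (\<lambda>S. f (Imap S)) \<ge> (1 - 3 * eps) * lam * expect_rand N delta (\<lambda>S. real (card S))
       \<and> greedy_block_rand N Ind f (1 - 3 * eps) delta Imap
       \<and> expect_rand N delta (\<lambda>S. real (card {e \<in> N - matchoid_span J Nj Ij S. marg f S e > (1 - eps) * lam}))
           \<le> (1 - eps) * real (card N)"
proof -
  have finN: "finite N" using M by (simp add: p_matchoid_def)
  define c where "c = (1 - eps) * lam"
  define Sp where "Sp = matchoid_span J Nj Ij"
  have c0: "0 \<le> c" unfolding c_def using epsb lamb by simp
  have Sp_sub: "\<And>S. Sp S \<subseteq> N" using M unfolding Sp_def matchoid_span_def mspan_def p_matchoid_def by blast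
  have C1': "expect_rand N delta (\<lambda>S. real (card {e \<in> N. marg f S e \<le> c})) \<le> eps * real (card N)"
    using deltab(3) unfolding C1_def c_def by simp
  have C2': "expect_rand N delta (\<lambda>S. real (card (Sp S))) \<le> eps * real (card N)"
    using deltab(4) unfolding C2_def Sp_def by simp
  have P1: "\<forall>S\<subseteq>N. Imap S \<subseteq> S \<and> Imap S \<in> Ind"
  proof (intro allI impI conjI)
    fix S assume SN: "S \<subseteq> N"
    show "Imap S \<subseteq> S" unfolding Imap_def by auto
    show "Imap S \<in> Ind" unfolding Ind_def matchoid_indep_def
    proof (intro CollectI conjI ballI)
      show "Imap S \<subseteq> N" using SN unfolding Imap_def by auto
      fix j assume j: "j \<in> J"
      have mj: "matroid (Nj j) (Ij j)" using M j by (auto simp: p_matchoid_def)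
      show "Imap S \<inter> Nj j \<in> Ij j"
      proof (rule indep_core[OF mj, of "S \<inter> Nj j"])
        show "S \<inter> Nj j \<subseteq> Nj j" by auto
        show "Imap S \<inter> Nj j \<subseteq> S \<inter> Nj j" unfolding Imap_def by auto
        show "\<forall>e\<in>Imap S \<inter> Nj j. mrank (Ij j) (S \<inter> Nj j - {e}) \<noteq> mrank (Ij j) (S \<inter> Nj j)"
        proof
          fix e assume e: "e \<in> Imap S \<inter> Nj j"
          then have "e \<notin> mspan (Nj j) (Ij j) ((S - {e}) \<inter> Nj j)" using j unfolding Imap_def matchoid_span_def by auto
          moreover have "(S - {e}) \<inter> Nj j = S \<inter> Nj j - {e}" by auto
          moreover have "insert e (S \<inter> Nj j - {e}) = S \<inter> Nj j" using e unfolding Imap_def by auto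
          ultimately show "mrank (Ij j) (S \<inter> Nj j - {e}) \<noteq> mrank (Ij j) (S \<inter> Nj j)"
            using e unfolding mspan_def by auto
        qed
      qed
    qed
  qed
  define ga where "ga = (\<lambda>e T. if marg f T e < c then (1::real) else 0)"
  define gb where "gb = (\<lambda>e T. if e \<in> Sp T then (1::real) else 0)"
  define a where "a = (\<lambda>e. expect_rand (N - {e}) delta (ga e))"
  define b where "b = (\<lambda>e. expect_rand (N - {e}) delta (gb e))"
  have a0: "a e \<ge> 0" for e unfolding a_def ga_def using deltab by (intro er_nonneg) auto
  have b0: "b e \<ge> 0" for e unfolding b_def gb_def using deltab by (intro er_nonneg) auto
  have EB1: "expect_rand N delta (\<lambda>S. real (card {e \<in> N. marg f S e \<le> c})) \<ge> (1 - delta) * (\<Sum>e\<in>N. a e)"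
  proof -
    have "expect_rand N delta (\<lambda>S. real (card {e \<in> N. marg f S e \<le> c}))
       = expect_rand N delta (\<lambda>S. \<Sum>e\<in>N. if marg f S e \<le> c then 1 else 0)"
      by (rule er_cong) (simp add: card_sum finN)
    also have "\<dots> = (\<Sum>e\<in>N. expect_rand N delta (\<lambda>S. if marg f S e \<le> c then 1 else 0))" by (rule er_sum)
    also have "\<dots> \<ge> (\<Sum>e\<in>N. expect_rand N delta (\<lambda>S. if e \<notin> S then ga e S else 0))"
      by (intro sum_mono er_mono) (use deltab in \<open>auto simp: ga_def\<close>)
    also have "(\<Sum>e\<in>N. expect_rand N delta (\<lambda>S. if e \<notin> S then ga e S else 0)) = (\<Sum>e\<in>N. (1 - delta) * a e)"
      by (rule sum.cong) (auto simp: er_out finN a_def)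
    finally show ?thesis by (simp add: sum_distrib_left)
  qed
  have EB2: "expect_rand N delta (\<lambda>S. real (card (Sp S))) \<ge> (1 - delta) * (\<Sum>e\<in>N. b e)"
  proof -
    have "expect_rand N delta (\<lambda>S. real (card (Sp S)))
       = expect_rand N delta (\<lambda>S. \<Sum>e\<in>N. if e \<in> Sp S then 1 else 0)"
    proof (rule er_cong)
      fix S
      have "Sp S = {e \<in> N. e \<in> Sp S}" using Sp_sub by auto
      then show "real (card (Sp S)) = (\<Sum>e\<in>N. if e \<in> Sp S then 1 else 0)"
        using card_sum[OF finN, of "\<lambda>e. e \<in> Sp S"] by simp
    qed
    also have "\<dots> = (\<Sum>e\<in>N. expect_rand N delta (\<lambda>S. if e \<in> Sp S then 1 else 0))" by (rule er_sum)
    also have "\<dots> \<ge> (\<Sum>e\<in>N. expect_rand N delta (\<lambda>S. if e \<notin> S then gb e S else 0))"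
      by (intro sum_mono er_mono) (use deltab in \<open>auto simp: gb_def\<close>)
    also have "(\<Sum>e\<in>N. expect_rand N delta (\<lambda>S. if e \<notin> S then gb e S else 0)) = (\<Sum>e\<in>N. (1 - delta) * b e)"
      by (rule sum.cong) (auto simp: er_out finN b_def)
    finally show ?thesis by (simp add: sum_distrib_left)
  qed
  have ES: "expect_rand N delta (\<lambda>S. real (card S)) = delta * real (card N)"
    by (rule er_card[OF finN])
  have dn: "delta * real (card N) \<le> eps * real (card N)"
  proof -
    have "expect_rand N delta (\<lambda>S. real (card S)) \<le> expect_rand N delta (\<lambda>S. real (card {e \<in> N. marg f S e \<le> c}))"
    proof (rule er_mono[OF deltab(1,2)])
      fix S assume "S \<subseteq> N"
      then have "S \<subseteq> {e \<in> N. marg f S e \<le> c}" using c0 by (auto simp: marg_def insert_absorb)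
      then show "real (card S) \<le> real (card {e \<in> N. marg f S e \<le> c})" using finN by (simp add: card_mono)
    qed
    then show ?thesis using ES C1' by linarith
  qed
  define h where "h = (\<lambda>S. c * (real (card S) - (\<Sum>e\<in>N. if e \<in> S then ga e (S - {e}) else 0)
       - (\<Sum>e\<in>N. if e \<in> S then gb e (S - {e}) else 0)))"
  have Eh: "expect_rand N delta h = c * (delta * real (card N) - delta * (\<Sum>e\<in>N. a e) - delta * (\<Sum>e\<in>N. b e))"
  proof -
    have "(\<Sum>e\<in>N. expect_rand N delta (\<lambda>S. if e \<in> S then ga e (S - {e}) else 0)) = (\<Sum>e\<in>N. delta * a e)"
      by (rule sum.cong) (auto simp: er_in finN a_def)
    moreover have "(\<Sum>e\<in>N. expect_rand N delta (\<lambda>S. if e \<in> S then gb e (S - {e}) else 0)) = (\<Sum>e\<in>N. delta * b e)"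
      by (rule sum.cong) (auto simp: er_in finN b_def)
    ultimately show ?thesis unfolding h_def er_cmult er_diff er_sum ES by (simp add: sum_distrib_left)
  qed
  have Efh: "expect_rand N delta (\<lambda>S. f (Imap S)) \<ge> expect_rand N delta h"
  proof (rule er_mono[OF deltab(1,2)])
    fix S assume SN: "S \<subseteq> N"
    define A where "A = {e \<in> N. e \<in> S \<and> marg f (S - {e}) e < c}"
    define B where "B = {e \<in> N. e \<in> S \<and> e \<in> Sp (S - {e})}"
    have fS: "finite S" using SN finN finite_subset by blast
    have fI: "finite (Imap S)" using fS unfolding Imap_def by simp
    have "f (Imap S) \<ge> c * real (card (Imap S))"
      by (rule f_lower[OF fsub fnorm SN fI]) (auto simp: Imap_def c_def)
    have "S \<subseteq> Imap S \<union> A \<union> B" using SN unfolding Imap_def A_def B_def Sp_def c_def by auto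
    then have "card S \<le> card (Imap S \<union> A \<union> B)" using fI finN by (intro card_mono) (auto simp: A_def B_def)
    also have "\<dots> \<le> card (Imap S) + card A + card B"
      using card_Un_le[of "Imap S \<union> A" B] card_Un_le[of "Imap S" A] by linarith
    finally have "real (card S) \<le> real (card (Imap S)) + real (card A) + real (card B)" by linarith
    moreover have "real (card A) = (\<Sum>e\<in>N. if e \<in> S then ga e (S - {e}) else 0)"
      unfolding A_def card_sum[OF finN] by (rule sum.cong) (auto simp: ga_def)
    moreover have "real (card B) = (\<Sum>e\<in>N. if e \<in> S then gb e (S - {e}) else 0)"
      unfolding B_def card_sum[OF finN] by (rule sum.cong) (auto simp: gb_def)
    ultimately have "real (card (Imap S)) \<ge> real (card S) - (\<Sum>e\<in>N. if e \<in> S then ga e (S - {e}) else 0)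
       - (\<Sum>e\<in>N. if e \<in> S then gb e (S - {e}) else 0)" by linarith
    then have "c * real (card (Imap S)) \<ge> h S" unfolding h_def using c0 by (intro mult_left_mono) auto
    then show "h S \<le> f (Imap S)" using \<open>f (Imap S) \<ge> c * real (card (Imap S))\<close> by linarith
  qed
  have key: "delta * ((\<Sum>e\<in>N. a e) + (\<Sum>e\<in>N. b e)) * (1 - eps) \<le> 2 * eps * delta * real (card N)"
  proof (cases "N = {}")
    case True then show ?thesis by simp
  next
    case False
    then have "real (card N) > 0" using finN by (simp add: card_gt_0_iff)
    then have de: "delta \<le> eps" using dn by simp
    have s0: "(\<Sum>e\<in>N. a e) + (\<Sum>e\<in>N. b e) \<ge> 0" using a0 b0 by (simp add: sum_nonneg add_nonneg_nonneg)
    have "delta * ((\<Sum>e\<in>N. a e) + (\<Sum>e\<in>N. b e)) * (1 - eps) \<le> delta * ((\<Sum>e\<in>N. a e) + (\<Sum>e\<in>N. b e)) * (1 - delta)"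
      using de s0 deltab by (intro mult_left_mono) auto
    also have "\<dots> = delta * ((1 - delta) * (\<Sum>e\<in>N. a e) + (1 - delta) * (\<Sum>e\<in>N. b e))" by (simp add: algebra_simps)
    also have "\<dots> \<le> delta * (2 * eps * real (card N))"
      using EB1 EB2 C1' C2' deltab by (intro mult_left_mono) auto
    finally show ?thesis by (simp add: ac_simps)
  qed
  have P2: "expect_rand N delta (\<lambda>S. f (Imap S)) \<ge> (1 - 3 * eps) * lam * expect_rand N delta (\<lambda>S. real (card S))"
  proof -
    have "lam * (delta * ((\<Sum>e\<in>N. a e) + (\<Sum>e\<in>N. b e)) * (1 - eps)) \<le> lam * (2 * eps * delta * real (card N))"
      using key lamb by (intro mult_left_mono) auto
    then have "(1 - 3 * eps) * lam * (delta * real (card N)) \<le> expect_rand N delta h"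
      unfolding Eh c_def by (simp add: algebra_simps)
    then show ?thesis using Efh ES by simp
  qed
  have P3: "greedy_block_rand N Ind f (1 - 3 * eps) delta Imap"
    unfolding greedy_block_rand_def
  proof (intro conjI P1)
    define Mx where "Mx = max 0 (if N = {} then 0 else Max ((\<lambda>e. f {e}) ` N))"
    have "Mx \<le> lam" unfolding Mx_def using lamb finN by (auto intro!: Max.boundedI)
    moreover have "0 \<le> (1 - 3 * eps) * expect_rand N delta (\<lambda>S. real (card S))"
      unfolding ES using epsb deltab by simp
    ultimately have "(1 - 3 * eps) * expect_rand N delta (\<lambda>S. real (card S)) * Mx \<le> (1 - 3 * eps) * expect_rand N delta (\<lambda>S. real (card S)) * lam"
      by (intro mult_left_mono) auto
    then show "(1 - 3 * eps) * expect_rand N delta (\<lambda>S. real (card S)) * Mx \<le> expect_rand N delta (\<lambda>S. f (Imap S))"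
      using P2 by (simp add: algebra_simps)
  qed
  define G where "G = (\<lambda>S. real (card {e \<in> N - Sp S. marg f S e > c}))"
  define B1 where "B1 = (\<lambda>S. real (card {e \<in> N. marg f S e \<le> c}))"
  define B2 where "B2 = (\<lambda>S. real (card (Sp S)))"
  have GB1: "G S \<le> real (card N) - B1 S" for S
  proof -
    have dj: "{e \<in> N - Sp S. marg f S e > c} \<inter> {e \<in> N. marg f S e \<le> c} = {}" by auto
    have sb: "{e \<in> N - Sp S. marg f S e > c} \<union> {e \<in> N. marg f S e \<le> c} \<subseteq> N" by auto
    have "card {e \<in> N - Sp S. marg f S e > c} + card {e \<in> N. marg f S e \<le> c} \<le> card N"
    proof -
      have f1: "finite {e \<in> N - Sp S. marg f S e > c}" using finN by simp
      have f2: "finite ({e \<in> N. marg f S e \<le> c})" using finN Sp_sub finite_subset by auto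
      have "card ({e \<in> N - Sp S. marg f S e > c} \<union> ({e \<in> N. marg f S e \<le> c})) = card {e \<in> N - Sp S. marg f S e > c} + card ({e \<in> N. marg f S e \<le> c})"
        by (rule card_Un_disjoint[OF f1 f2]) (use dj in blast)
      moreover have "card ({e \<in> N - Sp S. marg f S e > c} \<union> ({e \<in> N. marg f S e \<le> c})) \<le> card N"
        by (rule card_mono[OF finN]) (use sb in blast)
      ultimately show ?thesis by linarith
    qed
    then show ?thesis unfolding G_def B1_def by linarith
  qed
  have GB2: "G S \<le> real (card N) - B2 S" for S
  proof -
    have dj: "{e \<in> N - Sp S. marg f S e > c} \<inter> Sp S = {}" by auto
    have sb: "{e \<in> N - Sp S. marg f S e > c} \<union> Sp S \<subseteq> N" using Sp_sub by auto
    have "card {e \<in> N - Sp S. marg f S e > c} + card (Sp S) \<le> card N"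
    proof -
      have f1: "finite {e \<in> N - Sp S. marg f S e > c}" using finN by simp
      have f2: "finite (Sp S)" by (rule finite_subset[OF Sp_sub finN])
      have "card ({e \<in> N - Sp S. marg f S e > c} \<union> (Sp S)) = card {e \<in> N - Sp S. marg f S e > c} + card (Sp S)"
        by (rule card_Un_disjoint[OF f1 f2]) (use dj in blast)
      moreover have "card ({e \<in> N - Sp S. marg f S e > c} \<union> (Sp S)) \<le> card N"
        by (rule card_mono[OF finN]) (use sb in blast)
      ultimately show ?thesis by linarith
    qed
    then show ?thesis unfolding G_def B2_def by linarith
  qed
  have Econst: "expect_rand N delta (\<lambda>S. real (card N)) = real (card N)"
    using er_cmult[of N delta "real (card N)" "\<lambda>S. 1"] er_one[OF finN] by simp
  have EG1: "expect_rand N delta G \<le> real (card N) - expect_rand N delta B1"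
    using er_mono[OF deltab(1,2), of N G "\<lambda>S. real (card N) - B1 S"] GB1
    unfolding er_diff Econst by simp
  have EG2: "expect_rand N delta G \<le> real (card N) - expect_rand N delta B2"
    using er_mono[OF deltab(1,2), of N G "\<lambda>S. real (card N) - B2 S"] GB2
    unfolding er_diff Econst by simp
  have tight: "eps * real (card N) \<le> expect_rand N delta B1 \<or> eps * real (card N) \<le> expect_rand N delta B2"
  proof (rule ccontr)
    assume "\<not> ?thesis"
    then have l1: "expect_rand N delta B1 < eps * real (card N)" and l2: "expect_rand N delta B2 < eps * real (card N)" by auto
    have "N \<noteq> {}"
    proof
      assume "N = {}"
      then show False using l1 by (simp add: expect_rand_def B1_def)
    qed
    then have "real (card N) > 0" using finN by (simp add: card_gt_0_iff)
    then have d1: "delta < 1" using dn epsb by simp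
    have ev: "eventually (\<lambda>x. expect_rand N x B1 < eps * real (card N) \<and> expect_rand N x B2 < eps * real (card N)) (at_right delta)"
      using order_tendstoD(2)[OF er_tendsto l1] order_tendstoD(2)[OF er_tendsto l2] by (rule eventually_conj)
    then obtain bb where bb: "bb > delta" "\<And>y. y > delta \<Longrightarrow> y < bb \<Longrightarrow> expect_rand N y B1 < eps * real (card N) \<and> expect_rand N y B2 < eps * real (card N)"
      unfolding eventually_at_right_field by blast
    define y where "y = (delta + min bb 1) / 2"
    have y: "y > delta" "y < bb" "y \<le> 1" unfolding y_def using bb d1 by auto
    have "C1 y" "C2 y" using bb(2)[OF y(1,2)] unfolding C1_def C2_def B1_def B2_def c_def Sp_def by auto
    then have "y \<le> delta" using delta_max y deltab by auto
    then show False using y by simp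
  qed
  have P4: "expect_rand N delta G \<le> (1 - eps) * real (card N)"
    using tight EG1 EG2 by (auto simp: algebra_simps)
  show ?thesis using P1 P2 P3 P4 unfolding G_def Sp_def c_def by blast
qed

end
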